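(* Let $k\ge 3$ and $n>2k$, let $X$ be a linearly ordered set with $|X|=n$, and let $\mathcal{H}\subseteq\binom{X}{k}$ be an intersecting family. Suppose that for some $x<y$ in $X$, the shifted family $S_{xy}(\mathcal{H})$ is equal to a family $\mathcal{F}$ which is isomorphic to one of $\mathcal{J}_2$, $\mathcal{G}_{k-1}$ or $\mathcal{G}_2$. Then $\mathcal{H}$ is isomorphic to $\mathcal{F}$.
   Context: For $x<y$ in $X$ and a family $\mathcal{H}$, $S_{xy}(\mathcal{H})=\{S_{xy}(E):E\in\mathcal{H}\}$, where $S_{xy}(E)=(E\setminus\{y\})\cup\{x\}$ if $x\notin E$, $y\in E$ and $(E\setminus\{y\})\cup\{x\}\notin\mathcal{H}$, and $S_{xy}(E)=E$ otherwise. Two families on $X$ are isomorphic if each maps into the other under an injective map $X\to X$ (applied elementwise to members). $\mathcal{G}_i$ ($2\le i\le k$): a family isomorphic to $\{G\in\binom{X}{k}: E\subseteq G\}\cup\{G\in\binom{X}{k}: x_0\in G,\ G\cap E\neq\emptyset\}$ with $E\subseteq X$ an $i$-set and $x_0\in X\setminus E$. $\mathcal{J}_2$: a family isomorphic to $\{G\in\binom{X}{k}: E\subseteq G,\ G\cap J\neq\emptyset\}\cup\{G\in\binom{X}{k}: J\subseteq G\}\cup\{G\in\binom{X}{k}: x_0\in G,\ G\cap E\neq\emptyset\}$ with $E\subseteq X$ a $(k-1)$-set, $J\subseteq X\setminus E$ a $3$-set and $x_0\in J$. *)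

theory Defs
  imports Main
begin

definition ksets :: "'a set \<Rightarrow> nat \<Rightarrow> 'a set set" where
  "ksets X k = {G. G \<subseteq> X \<and> card G = k}"

definition intersecting :: "'a set set \<Rightarrow> bool" where
  "intersecting H \<longleftrightarrow> (\<forall>A\<in>H. \<forall>B\<in>H. A \<inter> B \<noteq> {})"

definition shift_set :: "'a \<Rightarrow> 'a \<Rightarrow> 'a set set \<Rightarrow> 'a set \<Rightarrow> 'a set" where
  "shift_set x y H E =
     (if x \<notin> E \<and> y \<in> E \<and> (E - {y}) \<union> {x} \<notin> H then (E - {y}) \<union> {x} else E)"

definition shift :: "'a \<Rightarrow> 'a \<Rightarrow> 'a set set \<Rightarrow> 'a set set" where
  "shift x y H = shift_set x y H ` H"

definition maps_into :: "'a set \<Rightarrow> 'a set set \<Rightarrow> 'a set set \<Rightarrow> bool" where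
  "maps_into X A B \<longleftrightarrow>
     (\<exists>f. inj_on f X \<and> f ` X \<subseteq> X \<and> (\<lambda>E. f ` E) ` A \<subseteq> B)"

definition iso_fam :: "'a set \<Rightarrow> 'a set set \<Rightarrow> 'a set set \<Rightarrow> bool" where
  "iso_fam X A B \<longleftrightarrow> maps_into X A B \<and> maps_into X B A"

definition G_std :: "'a set \<Rightarrow> nat \<Rightarrow> 'a set \<Rightarrow> 'a \<Rightarrow> 'a set set" where
  "G_std X k E x0 =
     {G \<in> ksets X k. E \<subseteq> G} \<union> {G \<in> ksets X k. x0 \<in> G \<and> G \<inter> E \<noteq> {}}"

definition is_G :: "'a set \<Rightarrow> nat \<Rightarrow> nat \<Rightarrow> 'a set set \<Rightarrow> bool" where
  "is_G X k i F \<longleftrightarrow>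
     (\<exists>E x0. E \<subseteq> X \<and> card E = i \<and> x0 \<in> X - E \<and> iso_fam X F (G_std X k E x0))"

definition J2_std :: "'a set \<Rightarrow> nat \<Rightarrow> 'a set \<Rightarrow> 'a set \<Rightarrow> 'a \<Rightarrow> 'a set set" where
  "J2_std X k E J x0 =
     {G \<in> ksets X k. E \<subseteq> G \<and> G \<inter> J \<noteq> {}} \<union> {G \<in> ksets X k. J \<subseteq> G}
     \<union> {G \<in> ksets X k. x0 \<in> G \<and> G \<inter> E \<noteq> {}}"

definition is_J2 :: "'a set \<Rightarrow> nat \<Rightarrow> 'a set set \<Rightarrow> bool" where
  "is_J2 X k F \<longleftrightarrow>
     (\<exists>E J x0. E \<subseteq> X \<and> card E = k - 1 \<and> J \<subseteq> X - E \<and> card J = 3 \<and> x0 \<in> J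
        \<and> iso_fam X F (J2_std X k E J x0))"

end

theory Submission
  imports Defs
begin

definition tr :: "'a \<Rightarrow> 'a \<Rightarrow> 'a \<Rightarrow> 'a" where
  "tr x y z = (if z = x then y else if z = y then x else z)"

lemma tr_tr[simp]: "tr x y (tr x y z) = z"
  by (auto simp: tr_def)

lemma tr_img_img[simp]: "tr x y ` (tr x y ` A) = A"
  by (simp add: image_image)

lemma inj_tr: "inj (tr x y)"
  by (metis injI tr_tr)

lemma tr_img_xy: "x \<in> A \<Longrightarrow> y \<notin> A \<Longrightarrow> tr x y ` A = insert y (A - {x})"
  by (auto simp: tr_def image_def split: if_splits)

lemma tr_img_yx: "x \<notin> A \<Longrightarrow> y \<in> A \<Longrightarrow> tr x y ` A = insert x (A - {y})"
  by (auto simp: tr_def image_def split: if_splits)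

lemma tr_img_both: "x \<in> A \<Longrightarrow> y \<in> A \<Longrightarrow> tr x y ` A = A"
  by (auto simp: tr_def image_def split: if_splits)

lemma tr_img_none: "x \<notin> A \<Longrightarrow> y \<notin> A \<Longrightarrow> tr x y ` A = A"
  by (auto simp: tr_def image_def split: if_splits)

lemma tr_X: "x \<in> X \<Longrightarrow> y \<in> X \<Longrightarrow> tr x y ` X = X"
  by (cases "x = y") (auto simp: tr_def image_def)

lemma tr_ksets: assumes "x \<in> X" "y \<in> X" "A \<in> ksets X k" shows "tr x y ` A \<in> ksets X k"
proof -
  have "card (tr x y ` A) = card A" by (rule card_image, rule inj_on_subset[OF inj_tr], simp)
  moreover have "tr x y ` A \<subseteq> X" using assms tr_X[of x X y] unfolding ksets_def by blast
  ultimately show ?thesis using assms unfolding ksets_def by auto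
qed

definition Kf :: "'a set set \<Rightarrow> 'a \<Rightarrow> 'a \<Rightarrow> 'a set set" where
  "Kf F x y = {A\<in>F. x \<in> A \<and> y \<notin> A \<and> tr x y ` A \<notin> F}"

definition closedU :: "'a set set \<Rightarrow> 'a \<Rightarrow> 'a set set \<Rightarrow> bool" where
  "closedU K x U \<longleftrightarrow> U \<subseteq> K \<and> (\<forall>A\<in>U. \<forall>C\<in>K. A \<inter> C = {x} \<longrightarrow> C \<in> U)"

definition conn :: "'a set set \<Rightarrow> 'a \<Rightarrow> bool" where
  "conn K x \<longleftrightarrow> (\<forall>U. closedU K x U \<longrightarrow> U \<noteq> {} \<longrightarrow> K \<subseteq> U)"

lemma shift_set_eq: "shift_set x y H E = (if x \<notin> E \<and> y \<in> E \<and> tr x y ` E \<notin> H then tr x y ` E else E)"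
  unfolding shift_set_def by (auto simp: tr_img_yx)

lemma shift_ksets:
  assumes "H \<subseteq> ksets X k" "x \<in> X" "y \<in> X"
  shows "shift x y H \<subseteq> ksets X k"
  using assms tr_ksets[OF assms(2,3)] unfolding shift_def shift_set_eq by auto

lemma stable:
  assumes "B \<in> shift x y H" "y \<in> B" "x \<notin> B" "x \<noteq> y"
  shows "tr x y ` B \<in> shift x y H"
proof -
  obtain E where E: "E \<in> H" "B = shift_set x y H E" using assms(1) unfolding shift_def by auto
  have "x \<notin> E" "y \<in> E" "tr x y ` E \<in> H"
    using E assms tr_img_yx[of x _ y] by (auto simp: shift_set_eq split: if_splits)
  moreover have "B = E" using E assms by (auto simp: shift_set_eq tr_img_yx split: if_splits)
  ultimately have "shift_set x y H (tr x y ` E) = tr x y ` E"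
    using assms by (auto simp: shift_set_eq tr_img_yx)
  then show ?thesis using \<open>B = E\<close> \<open>tr x y ` E \<in> H\<close> unfolding shift_def by (metis image_eqI)
qed

lemma main_generic:
  assumes HX: "H \<subseteq> ksets X k" and inter: "intersecting H"
    and xX: "x \<in> X" and yX: "y \<in> X" and xy: "x \<noteq> y"
    and c: "conn (Kf (shift x y H) x y) x"
  shows "H = shift x y H \<or> H = (\<lambda>A. tr x y ` A) ` shift x y H"
proof -
  define t where "t = tr x y"
  define F where "F = shift x y H"
  define M where "M = {E\<in>H. x \<notin> E \<and> y \<in> E \<and> t ` E \<notin> H}"
  define K where "K = Kf F x y"
  have Fdef: "F = (H - M) \<union> (\<lambda>E. t ` E) ` M"
    unfolding F_def shift_def M_def t_def shift_set_eq by (auto simp: image_iff)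
  have MF: "M \<inter> F = {}"
  proof -
    have "E \<notin> (\<lambda>E. t ` E) ` M" if "E \<in> M" for E
      using that xy unfolding M_def t_def by (auto simp: tr_def)
    then show ?thesis unfolding Fdef by auto
  qed
  have tMH: "(\<lambda>E. t ` E) ` M \<inter> H = {}" unfolding M_def t_def by auto
  have Heq: "H = (F - (\<lambda>E. t ` E) ` M) \<union> M"
    using tMH unfolding Fdef by (auto simp: M_def)
  have tMK: "(\<lambda>E. t ` E) ` M \<subseteq> K"
  proof
    fix A assume "A \<in> (\<lambda>E. t ` E) ` M"
    then obtain E where E: "E \<in> M" "A = t ` E" by auto
    have "A \<in> F" using E Fdef by auto
    moreover have "x \<in> A" "y \<notin> A" using E xy unfolding M_def t_def by (auto simp: tr_def)
    moreover have "t ` A \<notin> F" using E MF unfolding t_def by auto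
    ultimately show "A \<in> K" unfolding K_def Kf_def t_def by auto
  qed
  have cl: "closedU K x ((\<lambda>E. t ` E) ` M)"
    unfolding closedU_def
  proof (intro conjI tMK ballI impI)
    fix A C assume A: "A \<in> (\<lambda>E. t ` E) ` M" and C: "C \<in> K" and AC: "A \<inter> C = {x}"
    show "C \<in> (\<lambda>E. t ` E) ` M"
    proof (rule ccontr)
      assume nC: "C \<notin> (\<lambda>E. t ` E) ` M"
      have "C \<in> F" using C unfolding K_def Kf_def by auto
      then have CH: "C \<in> H" using nC Heq by auto
      obtain E where E: "E \<in> M" "A = t ` E" using A by auto
      have EH: "E \<in> H" using E M_def by auto
      have "E = t ` A" using E unfolding t_def by simp
      have yC: "y \<notin> C" using C unfolding K_def Kf_def by auto
      have xE: "x \<notin> E" using E M_def by auto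
      have "E \<inter> C = {}"
      proof (rule ccontr)
        assume "E \<inter> C \<noteq> {}"
        then obtain z where z: "z \<in> E" "z \<in> C" by auto
        then obtain w where w: "w \<in> A" "z = t w" using \<open>E = t ` A\<close> by auto
        show False
        proof (cases "w = x")
          case True then show ?thesis using w z yC by (simp add: t_def tr_def)
        next
          case False
          have "y \<notin> A" using E M_def xy by (auto simp: t_def tr_def)
          then have "w \<noteq> y" using w by auto
          then have "z = w" using False w by (simp add: t_def tr_def)
          then have "z \<in> A \<inter> C" using w z by auto
          then have "z = x" using AC by auto
          then show False using z xE by auto
        qed
      qed
      then show False using inter EH CH unfolding intersecting_def by auto
    qed
  qed
  show ?thesis
  proof (cases "M = {}")
    case True
    then show ?thesis using Fdef F_def by auto
  next
    case False
    then have KU: "K \<subseteq> (\<lambda>E. t ` E) ` M" using c cl unfolding conn_def K_def F_def by auto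
    then have tMK2: "(\<lambda>E. t ` E) ` M = K" using tMK by auto
    then have M2: "M = (\<lambda>E. t ` E) ` K"
      by (auto simp: image_image t_def)
    have "H = (\<lambda>A. t ` A) ` F"
    proof (rule set_eqI)
      fix G
      have memt: "G \<in> (\<lambda>A. t ` A) ` F \<longleftrightarrow> t ` G \<in> F"
        by (auto simp: t_def image_iff) (metis tr_img_img)
      have "G \<in> H \<longleftrightarrow> G \<in> (F - K) \<union> (\<lambda>E. t ` E) ` K" using Heq tMK2 M2 by simp
      also have "\<dots> \<longleftrightarrow> t ` G \<in> F"
      proof -
        have mem: "\<And>S. G \<in> (\<lambda>E. t ` E) ` S \<longleftrightarrow> t ` G \<in> S"
        proof -
          fix S
          show "G \<in> (\<lambda>E. t ` E) ` S \<longleftrightarrow> t ` G \<in> S"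
          proof
            assume "G \<in> (\<lambda>E. t ` E) ` S"
            then obtain E where "E \<in> S" "G = t ` E" by auto
            then show "t ` G \<in> S" by (simp add: t_def)
          next
            assume "t ` G \<in> S"
            then show "G \<in> (\<lambda>E. t ` E) ` S" by (rule rev_image_eqI) (simp add: t_def)
          qed
        qed
        have Kxy: "\<And>A. A \<in> K \<Longrightarrow> x \<in> A \<and> y \<notin> A" unfolding K_def Kf_def by auto
        have KF: "\<And>A. A \<in> K \<longleftrightarrow> A \<in> F \<and> x \<in> A \<and> y \<notin> A \<and> t ` A \<notin> F"
          unfolding K_def Kf_def t_def by auto
        show ?thesis
        proof (cases "x \<in> G")
          case xG: True
          show ?thesis
          proof (cases "y \<in> G")
            case True
            then have tG: "t ` G = G" using xG unfolding t_def by (simp add: tr_img_both)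
            have "G \<notin> K" using True Kxy by auto
            moreover have "t ` G \<notin> K" using True Kxy tG by auto
            ultimately show ?thesis using mem tG by auto
          next
            case yG: False
            have "t ` G \<in> F \<Longrightarrow> G \<in> F"
            proof -
              assume a: "t ` G \<in> F"
              have "y \<in> t ` G" "x \<notin> t ` G" using xG yG xy unfolding t_def by (auto simp: tr_img_xy)
              then have "t ` (t ` G) \<in> F" using stable[of "t ` G" x y H] a xy unfolding F_def t_def by simp
              then show "G \<in> F" unfolding t_def by simp
            qed
            moreover have "t ` G \<notin> K"
              using xG yG xy Kxy unfolding t_def by (auto simp: tr_img_xy)
            ultimately show ?thesis using KF xG yG mem by auto
          qed
        next
          case xG: False
          show ?thesis
          proof (cases "y \<in> G")
            case yG: True
            have "G \<in> F \<Longrightarrow> t ` G \<in> F"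
              using stable[of G x y H] xG yG xy unfolding F_def t_def by simp
            moreover have "G \<notin> K" using yG Kxy by auto
            moreover have "t ` G \<in> K \<longleftrightarrow> t ` G \<in> F \<and> G \<notin> F"
            proof -
              have "x \<in> t ` G" "y \<notin> t ` G" using xG yG xy unfolding t_def by (auto simp: tr_img_yx)
              moreover have "t ` (t ` G) = G" unfolding t_def by simp
              ultimately show ?thesis using KF[of "t ` G"] by simp
            qed
            ultimately show ?thesis using mem by auto
          next
            case False
            then have tG: "t ` G = G" using xG unfolding t_def by (simp add: tr_img_none)
            have "G \<notin> K" using xG Kxy by auto
            moreover have "t ` G \<notin> K" using xG Kxy tG by auto
            ultimately show ?thesis using mem tG by auto
          qed
        qed
      qed
      finally show "G \<in> H \<longleftrightarrow> G \<in> (\<lambda>A. t ` A) ` F" using memt by simp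
    qed
    then show ?thesis unfolding F_def t_def by simp
  qed
qed


lemma ex_kset:
  assumes "finite X" "B \<subseteq> X" "B \<inter> Z = {}" "card B \<le> k" "k \<le> card (X - Z)"
  shows "\<exists>A. A \<subseteq> X \<and> card A = k \<and> B \<subseteq> A \<and> A \<inter> Z = {}"
proof -
  have BXZ: "B \<subseteq> X - Z" using assms by auto
  have fin: "finite (X - Z)" using assms by auto
  have "card (X - Z - B) = card (X - Z) - card B"
    using card_Diff_subset[OF finite_subset[OF BXZ fin] BXZ] .
  then have "k - card B \<le> card (X - Z - B)" using assms by linarith
  then obtain S where S: "S \<subseteq> X - Z - B" "card S = k - card B"
    using obtain_subset_with_card_n by metis
  have finS: "finite S" using S(1) fin finite_subset by blast
  have finB: "finite B" using assms finite_subset by blast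
  have "card (B \<union> S) = card B + card S"
    by (rule card_Un_disjoint[OF finB finS]) (use S in auto)
  then have "card (B \<union> S) = k" using S assms by simp
  then show ?thesis using S assms by (intro exI[of _ "B \<union> S"]) auto
qed

definition Pb :: "'a set \<Rightarrow> nat \<Rightarrow> 'a set \<Rightarrow> 'a \<Rightarrow> 'a set \<Rightarrow> 'a set \<Rightarrow> 'a set set" where
  "Pb X k Z x B B' = {A \<in> ksets X k. B \<subseteq> A \<and> A \<inter> (B' - {x}) = {} \<and> A \<inter> Z = {}}"

definition blk :: "'a set \<Rightarrow> nat \<Rightarrow> 'a set \<Rightarrow> 'a \<Rightarrow> 'a set \<Rightarrow> 'a set \<Rightarrow> bool" where
  "blk X k Z x B1 B2 \<longleftrightarrow> finite X \<and> B1 \<subseteq> X \<and> B2 \<subseteq> X \<and> Z \<subseteq> X \<and> B1 \<inter> B2 = {x}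
     \<and> Z \<inter> (B1 \<union> B2) = {} \<and> card B1 \<le> k \<and> card B2 \<le> k
     \<and> 2 * k + 1 \<le> card (X - (B1 \<union> B2 \<union> Z)) + card B1 + card B2"

lemma blk_sym: "blk X k Z x B1 B2 \<Longrightarrow> blk X k Z x B2 B1"
  unfolding blk_def by (auto simp: Un_commute Int_commute)

lemma NB:
  assumes b: "blk X k Z x B B'" and SX: "S \<subseteq> X" and SB: "S \<inter> (B - {x}) = {}"
    and room: "card (S \<inter> (X - (B \<union> B' \<union> Z))) + k \<le> card (X - (B \<union> B' \<union> Z)) + card B"
  shows "\<exists>C \<in> Pb X k Z x B B'. C \<inter> S \<subseteq> {x}"
proof -
  define W where "W = X - (B \<union> B' \<union> Z)"
  define Zc where "Zc = Z \<union> (B' - {x}) \<union> (S - {x})"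
  have fX: "finite X" using b unfolding blk_def by auto
  have fW: "finite W" using fX W_def by auto
  have fB: "finite B" using b fX unfolding blk_def by (auto intro: finite_subset)
  have BZc: "B \<inter> Zc = {}" using b SB unfolding Zc_def blk_def by blast
  have sub: "B \<union> (W - S) \<subseteq> X - Zc" using b SB unfolding W_def Zc_def blk_def by auto
  have "card (B \<union> (W - S)) = card B + card (W - S)"
    by (rule card_Un_disjoint) (use fB fW W_def in auto)
  moreover have "card (W - S) = card W - card (W \<inter> S)"
    using card_Diff_subset_Int[of W S] fW by (simp add: Int_commute)
  moreover have "card (W \<inter> S) \<le> card W" using fW by (simp add: card_mono)
  ultimately have "k \<le> card (B \<union> (W - S))" using room unfolding W_def by (simp add: Int_commute)
  also have "\<dots> \<le> card (X - Zc)" using card_mono[OF _ sub] fX by auto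
  finally have kc: "k \<le> card (X - Zc)" .
  obtain C where C: "C \<subseteq> X" "card C = k" "B \<subseteq> C" "C \<inter> Zc = {}"
    using ex_kset[OF fX _ BZc _ kc] b unfolding blk_def by auto
  have "C \<in> Pb X k Z x B B'" using C unfolding Pb_def ksets_def Zc_def by auto
  moreover have "C \<inter> S \<subseteq> {x}" using C unfolding Zc_def by auto
  ultimately show ?thesis by auto
qed


lemma GK_one:
  assumes b: "blk X k Z x B1 B2" and cl: "closedU K x U"
    and P1K: "Pb X k Z x B1 B2 \<subseteq> K" and P2K: "Pb X k Z x B2 B1 \<subseteq> K"
    and A0U: "A0 \<in> U" and A0P: "A0 \<in> Pb X k Z x B1 B2"
  shows "Pb X k Z x B1 B2 \<subseteq> U \<and> Pb X k Z x B2 B1 \<subseteq> U"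
proof -
  define P1 where "P1 = Pb X k Z x B1 B2"
  define P2 where "P2 = Pb X k Z x B2 B1"
  define W where "W = X - (B1 \<union> B2 \<union> Z)"
  have fX: "finite X" using b unfolding blk_def by auto
  have xB1: "x \<in> B1" and xB2: "x \<in> B2" using b unfolding blk_def by auto
  have fB1: "finite B1" using b fX unfolding blk_def by (auto intro: finite_subset)
  have clos: "\<And>A C. A \<in> U \<Longrightarrow> C \<in> K \<Longrightarrow> A \<inter> C = {x} \<Longrightarrow> C \<in> U"
    using cl unfolding closedU_def by auto
  have P1mem: "\<And>A. A \<in> P1 \<longleftrightarrow> A \<subseteq> X \<and> card A = k \<and> B1 \<subseteq> A \<and> A \<inter> (B2 - {x}) = {} \<and> A \<inter> Z = {}"
    unfolding P1_def Pb_def ksets_def by auto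
  have A0: "A0 \<subseteq> X" "card A0 = k" "B1 \<subseteq> A0" "A0 \<inter> (B2 - {x}) = {}" "A0 \<inter> Z = {}"
    using A0P P1mem P1_def by auto
  have step: "\<forall>A\<in>P1. card (A - A0) = d \<longrightarrow> A \<in> U" for d
  proof (induction d)
    case 0
    show ?case
    proof (intro ballI impI)
      fix A assume A: "A \<in> P1" "card (A - A0) = 0"
      have fA: "finite A" using A P1mem fX finite_subset by metis
      have "A - A0 = {}" using A fA by auto
      then have "A \<subseteq> A0" by auto
      moreover have "finite A0" using A0 fX finite_subset by metis
      ultimately have "A = A0" using card_subset_eq A A0 P1mem by metis
      then show "A \<in> U" using A0U by simp
    qed
  next
    case (Suc d)
    show ?case
    proof (intro ballI impI)
      fix A assume A: "A \<in> P1" "card (A - A0) = Suc d"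
      have Am: "A \<subseteq> X" "card A = k" "B1 \<subseteq> A" "A \<inter> (B2 - {x}) = {}" "A \<inter> Z = {}"
        using A P1mem by auto
      have fA: "finite A" using Am fX finite_subset by metis
      have fA0: "finite A0" using A0 fX finite_subset by metis
      obtain b where bA: "b \<in> A" "b \<notin> A0"
        using A by (metis Diff_iff card_0_eq equals0I fA finite_Diff nat.distinct(1))
      have c1: "card (A - A0) = card A - card (A \<inter> A0)" using card_Diff_subset_Int fA0
        by (simp add: card_Diff_subset_Int)
      have c2: "card (A0 - A) = card A0 - card (A0 \<inter> A)" using card_Diff_subset_Int fA
        by (simp add: card_Diff_subset_Int)
      have "A0 \<inter> A = A \<inter> A0" by blast
      then have "card (A0 - A) = Suc d" using c1 c2 A(2) Am(2) A0(2) by simp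
      then obtain a where aA: "a \<in> A0" "a \<notin> A"
        by (metis Diff_iff card_0_eq equals0I fA0 finite_Diff nat.distinct(1))
      define A' where "A' = insert a (A - {b})"
      have "card (A - {b}) = k - 1" using bA fA Am by simp
      moreover have "card A > 0" using bA fA card_gt_0_iff by blast
      then have "k \<ge> 1" using Am by simp
      moreover have "a \<notin> A - {b}" "finite (A - {b})" using aA fA by auto
      ultimately have cA': "card A' = k" unfolding A'_def by simp
      have A'P: "A' \<in> P1"
        unfolding P1mem using cA' Am aA bA A0 unfolding A'_def by auto
      have "A' - A0 = (A - A0) - {b}" unfolding A'_def using aA by auto
      then have "card (A' - A0) = d" using A bA by simp
      then have A'U: "A' \<in> U" using Suc A'P by auto
      define S where "S = insert a A"
      have SX: "S \<subseteq> X" using Am aA A0 unfolding S_def by auto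
      have SB: "S \<inter> (B2 - {x}) = {}" using Am aA A0 unfolding S_def by auto
      have fS: "finite S" using fA S_def by auto
      have cS: "card S = Suc k" using aA fA Am unfolding S_def by simp
      have "card (S \<inter> W) \<le> card (S - B1)"
        by (rule card_mono) (use fS W_def in auto)
      also have "\<dots> = card S - card B1"
        by (rule card_Diff_subset[OF fB1]) (use Am in \<open>auto simp: S_def\<close>)
      finally have "card (S \<inter> W) + k \<le> card W + card B2"
        using b cS unfolding blk_def W_def by linarith
      moreover have "X - (B2 \<union> B1 \<union> Z) = W" unfolding W_def by blast
      ultimately obtain C where C: "C \<in> P2" "C \<inter> S \<subseteq> {x}"
        using NB[OF blk_sym[OF b] SX SB] unfolding P2_def by metis
      have CK: "C \<in> K" using C P2K P2_def by auto
      have xC: "x \<in> C" using C xB2 unfolding P2_def Pb_def by auto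
      have xA: "x \<in> A" "x \<in> A'" using Am xB1 A'P P1mem by auto
      have "A' \<inter> C = {x}" using C xC xA unfolding S_def A'_def by auto
      then have "C \<in> U" using clos A'U CK by auto
      moreover have "C \<inter> A = {x}" using C xC xA unfolding S_def by auto
      moreover have "A \<in> K" using A P1K P1_def by auto
      ultimately show "A \<in> U" using clos by auto
    qed
  qed
  have P1U: "P1 \<subseteq> U" using step by auto
  have P2U: "P2 \<subseteq> U"
  proof
    fix C assume C: "C \<in> P2"
    have Cm: "C \<subseteq> X" "card C = k" "B2 \<subseteq> C" "C \<inter> (B1 - {x}) = {}" "C \<inter> Z = {}"
      using C unfolding P2_def Pb_def ksets_def by auto
    have fC: "finite C" using Cm fX finite_subset by metis
    have fB2: "finite B2" using b fX unfolding blk_def by (auto intro: finite_subset)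
    have "card (C \<inter> W) \<le> card (C - B2)"
      by (rule card_mono) (use fC W_def in auto)
    also have "\<dots> = card C - card B2"
      using card_Diff_subset[OF fB2] Cm by auto
    finally have "card (C \<inter> W) + k \<le> card W + card B1"
      using b Cm unfolding blk_def W_def by linarith
    then obtain A where A: "A \<in> P1" "A \<inter> C \<subseteq> {x}"
      using NB[OF b Cm(1) Cm(4)] unfolding P1_def W_def by auto
    have "x \<in> A" using A P1mem xB1 by auto
    then have "A \<inter> C = {x}" using A Cm xB2 by auto
    moreover have "A \<in> U" using A P1U by auto
    moreover have "C \<in> K" using C P2K P2_def by auto
    ultimately show "C \<in> U" using clos by auto
  qed
  show ?thesis using P1U P2U P1_def P2_def by auto
qed

lemma GK:
  assumes b: "blk X k Z x B1 B2" and cl: "closedU K x U"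
    and P1K: "Pb X k Z x B1 B2 \<subseteq> K" and P2K: "Pb X k Z x B2 B1 \<subseteq> K"
    and ne: "U \<inter> (Pb X k Z x B1 B2 \<union> Pb X k Z x B2 B1) \<noteq> {}"
  shows "Pb X k Z x B1 B2 \<union> Pb X k Z x B2 B1 \<subseteq> U"
proof -
  obtain A0 where "A0 \<in> U" "A0 \<in> Pb X k Z x B1 B2 \<or> A0 \<in> Pb X k Z x B2 B1" using ne by auto
  then show ?thesis
    using GK_one[OF b cl P1K P2K] GK_one[OF blk_sym[OF b] cl P2K P1K] by blast
qed


lemma card_Diff_sub: "finite X \<Longrightarrow> S \<subseteq> X \<Longrightarrow> card (X - S) = card X - card S"
  by (meson card_Diff_subset finite_subset)

definition Apart :: "'a set \<Rightarrow> nat \<Rightarrow> 'a \<Rightarrow> 'a \<Rightarrow> 'a set \<Rightarrow> 'a set set" where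
  "Apart X k x y E = {A \<in> ksets X k. x \<in> A \<and> y \<notin> A \<and> A \<inter> E \<noteq> {} \<and> \<not> E \<subseteq> A}"

lemma patA:
  assumes fX: "finite X" and cX: "2 * k + 1 \<le> card X" and k3: "3 \<le> k"
    and xX: "x \<in> X" and yX: "y \<in> X" and xy: "x \<noteq> y" and EX: "E \<subseteq> X - {x, y}"
    and cl: "closedU K x U" and AK: "Apart X k x y E \<subseteq> K"
    and ne: "U \<inter> Apart X k x y E \<noteq> {}"
  shows "Apart X k x y E \<subseteq> U"
proof -
  define Q where "Q e f = Pb X k {y} x {x, e} {x, f}" for e f
  have Qmem: "A \<in> Q e f \<longleftrightarrow> A \<in> ksets X k \<and> x \<in> A \<and> e \<in> A \<and> f \<notin> A \<and> y \<notin> A"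
    if "e \<in> E" "f \<in> E" "e \<noteq> f" for A e f
    using that EX unfolding Q_def Pb_def by auto
  have QA: "Q e f \<subseteq> Apart X k x y E" if "e \<in> E" "f \<in> E" "e \<noteq> f" for e f
    using Qmem[OF that] that unfolding Apart_def by auto
  have blkQ: "blk X k {y} x {x, e} {x, f}" if "e \<in> E" "f \<in> E" "e \<noteq> f" for e f
  proof -
    have d: "x \<noteq> e" "x \<noteq> f" "y \<noteq> e" "y \<noteq> f" "e \<in> X" "f \<in> X" using that EX by auto
    have "{x, e} \<union> {x, f} \<union> {y} = {x, e, f, y}" by auto
    moreover have "card {x, e, f, y} = 4" using d that xy by auto
    moreover have "{x, e, f, y} \<subseteq> X" using d xX yX by auto
    ultimately have "card (X - ({x, e} \<union> {x, f} \<union> {y})) = card X - 4"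
      using card_Diff_sub[OF fX] by metis
    moreover have "card {x, e} = 2" "card {x, f} = 2" using d by auto
    ultimately show ?thesis unfolding blk_def using fX d xX yX xy that cX k3 by auto
  qed
  have GKef: "Q e f \<union> Q f e \<subseteq> U"
    if "e \<in> E" "f \<in> E" "e \<noteq> f" "U \<inter> (Q e f \<union> Q f e) \<noteq> {}" for e f
    using GK[OF blkQ[OF that(1-3)] cl] QA[OF that(1-3)] QA[OF that(2,1) that(3)[symmetric]] AK that(4)
    unfolding Q_def by blast
  have link: "Q e f \<inter> Q e h \<noteq> {}" if "e \<in> E" "f \<in> E" "h \<in> E" "e \<noteq> f" "e \<noteq> h" for e f h
  proof -
    have d: "x \<noteq> e" "y \<noteq> e" "e \<in> X" "f \<in> X" "h \<in> X" "x \<noteq> f" "x \<noteq> h" "e \<noteq> f" "e \<noteq> h" using that EX by auto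
    have "card {y, f, h} \<le> 3" by (rule order_trans[OF card_insert_le_m1]) (auto simp: card_insert_le_m1)
    moreover have "card (X - {y, f, h}) = card X - card {y, f, h}"
      using card_Diff_sub[OF fX] d yX by auto
    ultimately have "k \<le> card (X - {y, f, h})" using cX k3 by linarith
    moreover have "card {x, e} \<le> k" using k3 d by auto
    ultimately obtain A where A: "A \<subseteq> X" "card A = k" "{x, e} \<subseteq> A" "A \<inter> {y, f, h} = {}"
      using ex_kset[OF fX, of "{x, e}" "{y, f, h}" k] d xX xy that by auto
    then have "A \<in> Q e f" "A \<in> Q e h" using Qmem that unfolding ksets_def by auto
    then show ?thesis by auto
  qed
  have ext: "Q e h \<subseteq> U \<and> Q h e \<subseteq> U"
    if "e \<in> E" "f \<in> E" "h \<in> E" "e \<noteq> f" "e \<noteq> h" "Q e f \<subseteq> U" for e f h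
  proof -
    have "U \<inter> (Q e h \<union> Q h e) \<noteq> {}" using link[OF that(1-5)] that(6) by blast
    then show ?thesis using GKef[OF that(1,3,5)] by auto
  qed
  have memQ: "\<exists>e f. e \<in> E \<and> f \<in> E \<and> e \<noteq> f \<and> A \<in> Q e f" if "A \<in> Apart X k x y E" for A
  proof -
    note a = that
    obtain e f where "e \<in> A \<inter> E" "f \<in> E - A" using a unfolding Apart_def by auto
    then show ?thesis using a Qmem[of e f A] unfolding Apart_def by (intro exI[of _ e] exI[of _ f]) auto
  qed
  obtain A0 where A0: "A0 \<in> U" "A0 \<in> Apart X k x y E" using ne by auto
  obtain e f where ef: "e \<in> E" "f \<in> E" "e \<noteq> f" "A0 \<in> Q e f" using memQ[OF A0(2)] by auto
  have Qef: "Q e f \<subseteq> U" using GKef[OF ef(1-3)] A0 ef by auto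
  show ?thesis
  proof
    fix C assume C: "C \<in> Apart X k x y E"
    obtain g h where gh: "g \<in> E" "h \<in> E" "g \<noteq> h" "C \<in> Q g h" using memQ[OF C] by auto
    have "Q g h \<subseteq> U"
    proof (cases "g = e")
      case True
      then show ?thesis using ext[OF ef(1,2) gh(2) ef(3) _ Qef] gh by auto
    next
      case False
      then have "Q g e \<subseteq> U" using ext[OF ef(1,2) gh(1) ef(3) _ Qef] by auto
      then show ?thesis using ext[OF gh(1) ef(1) gh(2) _ gh(3)] False by auto
    qed
    then show "C \<in> U" using gh by auto
  qed
qed


lemma Kf_char:
  assumes "F \<subseteq> ksets X k" "x \<in> X" "y \<in> X"
  shows "Kf F x y = {A \<in> F. x \<in> A \<and> y \<notin> A \<and> insert y (A - {x}) \<notin> F}"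
  unfolding Kf_def using tr_img_xy[of x _ y] by auto

lemma ins_ksets:
  assumes "A \<in> ksets X k" "x \<in> A" "y \<notin> A" "y \<in> X" "finite X"
  shows "insert y (A - {x}) \<in> ksets X k"
proof -
  have "finite A" using assms(1,5) unfolding ksets_def by (auto intro: finite_subset)
  moreover have "card A > 0" using \<open>finite A\<close> assms(2) card_gt_0_iff by blast
  ultimately show ?thesis using assms unfolding ksets_def by (auto simp: card_Suc_Diff1)
qed

lemma conn_G:
  assumes fX: "finite X" and cX: "2 * k + 1 \<le> card X" and k3: "3 \<le> k"
    and EX: "E \<subseteq> X" and x0X: "x0 \<in> X" "x0 \<notin> E" and cE: "card E = i" "2 \<le> i" "i \<le> k - 1"
    and xX: "x \<in> X" and yX: "y \<in> X" and xy: "x \<noteq> y"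
  shows "conn (Kf (G_std X k E x0) x y) x"
  unfolding conn_def
proof (intro allI impI)
  fix U assume cl: "closedU (Kf (G_std X k E x0) x y) x U" and Une: "U \<noteq> {}"
  define K where "K = Kf (G_std X k E x0) x y"
  define pg where "pg A \<longleftrightarrow> E \<subseteq> A \<or> (x0 \<in> A \<and> A \<inter> E \<noteq> {})" for A
  have GS: "G_std X k E x0 \<subseteq> ksets X k" unfolding G_std_def by auto
  have Kc: "A \<in> K \<longleftrightarrow> A \<in> ksets X k \<and> x \<in> A \<and> y \<notin> A \<and> pg A \<and> \<not> pg (insert y (A - {x}))" for A
  proof -
    have "A \<in> ksets X k \<Longrightarrow> x \<in> A \<Longrightarrow> y \<notin> A \<Longrightarrow> insert y (A - {x}) \<in> ksets X k"
      using ins_ksets yX fX by metis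
    then show ?thesis unfolding K_def Kf_char[OF GS xX yX] unfolding G_std_def pg_def by auto
  qed
  have UK: "U \<subseteq> K" using cl unfolding closedU_def K_def by auto
  have fE: "finite E" using EX fX finite_subset by auto
  have E2: "\<exists>e\<in>E. e \<noteq> z" for z
  proof (rule ccontr)
    assume "\<not> ?thesis" then have "E \<subseteq> {z}" by auto
    then have "card E \<le> 1" using card_mono[of "{z}" E] by auto
    then show False using cE by auto
  qed
  show "K \<subseteq> U" unfolding K_def[symmetric]
  proof (cases "x = x0 \<and> y \<notin> E")
    case True
    have "K = Apart X k x y E"
    proof (rule set_eqI)
      fix A
      obtain e where "e \<in> E" using E2 by blast
      then show "A \<in> K \<longleftrightarrow> A \<in> Apart X k x y E"
        unfolding Kc Apart_def pg_def using True x0X by auto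
    qed
    moreover have "E \<subseteq> X - {x, y}" using True EX x0X by auto
    ultimately show ?thesis
      using patA[OF fX cX k3 xX yX xy _ cl[folded K_def]] UK Une by auto
  next
    case c1: False
    show ?thesis
    proof (cases "x = x0 \<and> y \<in> E")
      case True
      have "K = Apart X k x y (E - {y})"
      proof (rule set_eqI)
        fix A
        show "A \<in> K \<longleftrightarrow> A \<in> Apart X k x y (E - {y})"
          unfolding Kc Apart_def pg_def using True x0X by auto
      qed
      moreover have "E - {y} \<subseteq> X - {x, y}" using True EX x0X by auto
      ultimately show ?thesis
        using patA[OF fX cX k3 xX yX xy _ cl[folded K_def]] UK Une by auto
    next
      case c2: False
      show ?thesis
      proof (cases "x \<in> E \<and> y \<notin> E \<and> y \<noteq> x0")
        case True
        obtain e where e: "e \<in> E" "e \<noteq> x" using E2 by blast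
        have xx0: "x \<noteq> x0" using True x0X by auto
        have "K = Pb X k {y} x E {x, x0} \<union> Pb X k {y} x {x, x0} E"
        proof (rule set_eqI)
          fix A
          show "A \<in> K \<longleftrightarrow> A \<in> Pb X k {y} x E {x, x0} \<union> Pb X k {y} x {x, x0} E"
            unfolding Kc Pb_def pg_def using True xx0 e by auto
        qed
        moreover have bk: "blk X k {y} x E {x, x0}"
        proof -
          have "E \<union> {x, x0} \<union> {y} = insert y (insert x0 E)" using True by auto
          moreover have "card (insert y (insert x0 E)) = i + 2" using True x0X cE fE by auto
          moreover have "insert y (insert x0 E) \<subseteq> X" using EX x0X yX by auto
          ultimately have "card (X - (E \<union> {x, x0} \<union> {y})) = card X - (i + 2)"
            using card_Diff_sub[OF fX] by metis
          moreover have "card {x, x0} = 2" using xx0 by auto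
          moreover have "i + 2 \<le> card X" using cX cE k3 by linarith
          ultimately show ?thesis unfolding blk_def using fX EX x0X xX yX True xx0 cE cX k3 by auto
        qed
        ultimately show ?thesis
          using GK[OF bk cl[folded K_def]] UK Une by auto
      next
        case c3: False
        have "K = {}"
        proof (rule ccontr)
          assume "K \<noteq> {}"
          then obtain A where A: "A \<in> K" by auto
          obtain e where e: "e \<in> E" "e \<noteq> x" using E2 by blast
          obtain e' where e': "e' \<in> E" "e' \<noteq> y" using E2 by blast
          have A1: "x \<in> A" "y \<notin> A" "pg A" "\<not> pg (insert y (A - {x}))" using A Kc by auto
          have xx0: "x \<noteq> x0" using c1 c2 by auto
          show False
          proof (cases "x \<in> E")
            case True
            then have "y \<in> E \<or> y = x0" using c3 by auto
            then show False
            proof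
              assume yE: "y \<in> E"
              then have "x0 \<in> A" using A1 unfolding pg_def by auto
              then have "pg (insert y (A - {x}))" using yE xx0 unfolding pg_def by blast
              then show False using A1 by simp
            next
              assume yx: "y = x0"
              then have "E \<subseteq> A" using A1 unfolding pg_def by auto
              then have "pg (insert y (A - {x}))" using yx e unfolding pg_def by blast
              then show False using A1 by simp
            qed
          next
            case False
            have "pg (insert y (A - {x}))" using A1(3) False xx0 unfolding pg_def by blast
            then show False using A1 by simp
          qed
        qed
        then show ?thesis by auto
      qed
    qed
  qed
qed


lemma card_le_ins: "finite S \<Longrightarrow> card (insert a S) \<le> card S + 1"
  by (simp add: card_insert_if)

lemma patC:
  assumes fX: "finite X" and cX: "2 * k + 1 \<le> card X" and k3: "3 \<le> k"
    and xX: "x \<in> X" and yX: "y \<in> X" and xy: "x \<noteq> y"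
    and EX: "E \<subseteq> X - {x, y}" and Ene: "E \<noteq> {}" and cE: "card E \<le> k - 1"
    and JX: "J' \<subseteq> X - {x, y}" and cJ: "card J' = 2" and EJ: "E \<inter> J' = {}"
    and cl: "closedU K x U"
    and Keq: "K = Apart X k x y E \<union> Pb X k {y} x (insert x E) (insert x J') \<union> Pb X k {y} x (insert x J') (insert x E)"
    and Une: "U \<noteq> {}"
  shows "K \<subseteq> U"
proof -
  define P1 where "P1 = Pb X k {y} x (insert x E) (insert x J')"
  define P2 where "P2 = Pb X k {y} x (insert x J') (insert x E)"
  have fE: "finite E" using EX fX finite_subset by blast
  have fJ: "finite J'" using JX fX finite_subset by blast
  have UK: "U \<subseteq> K" using cl unfolding closedU_def by auto
  have clos: "\<And>A C. A \<in> U \<Longrightarrow> C \<in> K \<Longrightarrow> A \<inter> C = {x} \<Longrightarrow> C \<in> U"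
    using cl unfolding closedU_def by auto
  have bk: "blk X k {y} x (insert x E) (insert x J')"
  proof -
    have xE: "x \<notin> E" "x \<notin> J'" "y \<notin> E" "y \<notin> J'" using EX JX by auto
    have cIE: "card (insert x E) = card E + 1" using xE fE by simp
    have cIJ: "card (insert x J') = 3" using xE fJ cJ by simp
    have u: "insert x E \<union> insert x J' \<union> {y} = insert x (insert y (E \<union> J'))" by auto
    have "card (insert x (insert y (E \<union> J'))) = card E + 4"
      using xE xy fE fJ EJ cJ by (simp add: card_Un_disjoint)
    moreover have "insert x (insert y (E \<union> J')) \<subseteq> X" using EX JX xX yX by auto
    ultimately have "card (X - (insert x E \<union> insert x J' \<union> {y})) = card X - (card E + 4)"
      using card_Diff_sub[OF fX] u by metis
    moreover have "card E + 4 \<le> card X" using cX cE k3 by linarith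
    ultimately show ?thesis unfolding blk_def using fX EX JX xX yX xy cIE cIJ cE k3 EJ cX by auto
  qed
  have PK: "P1 \<subseteq> K" "P2 \<subseteq> K" "Apart X k x y E \<subseteq> K" using Keq P1_def P2_def by auto
  have GKC: "U \<inter> (P1 \<union> P2) \<noteq> {} \<Longrightarrow> P1 \<union> P2 \<subseteq> U"
    using GK[OF bk cl] PK unfolding P1_def P2_def by auto
  have AC: "U \<inter> Apart X k x y E \<noteq> {} \<Longrightarrow> Apart X k x y E \<subseteq> U"
    using patA[OF fX cX k3 xX yX xy EX cl PK(3)] .
  have edge: "\<exists>S T. S \<in> Apart X k x y E \<and> T \<in> P2 \<and> S \<inter> T = {x}"
    if ef: "e \<in> E" "f \<in> E" "e \<noteq> f" for e f
  proof -
    have xE: "x \<notin> E" "x \<notin> J'" "y \<notin> E" "y \<notin> J'" "e \<in> X" "f \<in> X" "x \<noteq> e" "y \<noteq> e" "y \<noteq> f"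
      using EX JX ef by auto
    have c1: "card (X - insert y E) = card X - (card E + 1)"
      using card_Diff_sub[OF fX, of "insert y E"] EX yX xE fE by auto
    have "k \<le> card (X - insert y E)" using c1 cX cE k3 by linarith
    moreover have "card (insert x J') \<le> k" using xE fJ cJ k3 by simp
    moreover have "insert x J' \<inter> insert y E = {}" using xE xy EJ by auto
    moreover have "insert x J' \<subseteq> X" using xX JX by auto
    ultimately obtain T where T: "T \<subseteq> X" "card T = k" "insert x J' \<subseteq> T" "T \<inter> insert y E = {}"
      using ex_kset[OF fX] by metis
    have fT: "finite T" using T fX finite_subset by blast
    define Z where "Z = insert y (insert f (T - {x}))"
    have "card Z \<le> card (T - {x}) + 2" unfolding Z_def
      using card_le_ins[of "insert f (T - {x})" y] card_le_ins[of "T - {x}" f] fT by auto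
    moreover have "card (T - {x}) = k - 1" using T xE by auto
    ultimately have cZ: "card Z \<le> k + 1" using k3 by linarith
    have ZX: "Z \<subseteq> X" using T yX xE unfolding Z_def by auto
    have "card (X - Z) = card X - card Z" using card_Diff_sub[OF fX ZX] .
    then have "k \<le> card (X - Z)" using cZ cX by linarith
    moreover have "card {x, e} \<le> k" using k3 xE by simp
    moreover have "{x, e} \<inter> Z = {}" using T xE xy ef unfolding Z_def by auto
    moreover have "{x, e} \<subseteq> X" using xX xE by auto
    ultimately obtain S where S: "S \<subseteq> X" "card S = k" "{x, e} \<subseteq> S" "S \<inter> Z = {}"
      using ex_kset[OF fX] by metis
    have "S \<in> Apart X k x y E" using S ef unfolding Apart_def ksets_def Z_def by auto
    moreover have "T \<in> P2" using T unfolding P2_def Pb_def ksets_def by auto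
    moreover have "S \<inter> T = {x}" using S T unfolding Z_def by auto
    ultimately show ?thesis by blast
  qed
  have two: "\<exists>e f. e \<in> E \<and> f \<in> E \<and> e \<noteq> f" if "Apart X k x y E \<noteq> {}"
    using that unfolding Apart_def by blast
  show ?thesis
  proof (cases "U \<inter> Apart X k x y E \<noteq> {}")
    case True
    then have AU: "Apart X k x y E \<subseteq> U" using AC by auto
    then obtain e f where "e \<in> E" "f \<in> E" "e \<noteq> f" using two True by blast
    then obtain S T where ST: "S \<in> Apart X k x y E" "T \<in> P2" "S \<inter> T = {x}" using edge by blast
    then have "T \<in> U" using clos AU PK by blast
    then have "P1 \<union> P2 \<subseteq> U" using GKC ST by blast
    then show ?thesis using AU Keq P1_def P2_def by auto
  next
    case False
    then have "U \<inter> (P1 \<union> P2) \<noteq> {}" using UK Une Keq P1_def P2_def by auto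
    then have PU: "P1 \<union> P2 \<subseteq> U" using GKC by auto
    have "Apart X k x y E \<subseteq> U"
    proof (cases "Apart X k x y E = {}")
      case False
      then obtain e f where "e \<in> E" "f \<in> E" "e \<noteq> f" using two by blast
      then obtain S T where ST: "S \<in> Apart X k x y E" "T \<in> P2" "S \<inter> T = {x}" using edge by blast
      moreover have "T \<inter> S = {x}" using ST by blast
      ultimately have "S \<in> U" using clos[of T S] PU PK by blast
      then show ?thesis using AC ST by blast
    qed simp
    then show ?thesis using PU Keq P1_def P2_def by auto
  qed
qed


lemma blk_intro:
  assumes fX: "finite X" and s: "B1 \<subseteq> X" "B2 \<subseteq> X" "Z \<subseteq> X" and i: "B1 \<inter> B2 = {x}"
    and z: "Z \<inter> (B1 \<union> B2) = {}" and c: "card B1 \<le> k" "card B2 \<le> k" and r: "2 * k + card Z \<le> card X"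
  shows "blk X k Z x B1 B2"
proof -
  have f: "finite B1" "finite B2" "finite Z" using s fX by (auto intro: finite_subset)
  have "card (B1 \<union> B2) + card (B1 \<inter> B2) = card B1 + card B2" using card_Un_Int[OF f(1,2)] by simp
  then have c12: "card (B1 \<union> B2) + 1 = card B1 + card B2" using i by simp
  have "card (B1 \<union> B2 \<union> Z) = card (B1 \<union> B2) + card Z"
    by (rule card_Un_disjoint) (use f z in auto)
  moreover have "card (X - (B1 \<union> B2 \<union> Z)) = card X - card (B1 \<union> B2 \<union> Z)"
    using card_Diff_sub[OF fX] s by auto
  moreover have "card (B1 \<union> B2 \<union> Z) \<le> card X" using card_mono[OF fX] s by auto
  ultimately have "2 * k + 1 \<le> card (X - (B1 \<union> B2 \<union> Z)) + card B1 + card B2"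
    using c12 r c by linarith
  then show ?thesis unfolding blk_def using fX s i z c by auto
qed

definition pj :: "'a set \<Rightarrow> 'a set \<Rightarrow> 'a \<Rightarrow> 'a set \<Rightarrow> bool" where
  "pj E J x0 A \<longleftrightarrow> (E \<subseteq> A \<and> A \<inter> J \<noteq> {}) \<or> J \<subseteq> A \<or> (x0 \<in> A \<and> A \<inter> E \<noteq> {})"

lemma J2_pj: "J2_std X k E J x0 = {G \<in> ksets X k. pj E J x0 G}"
  unfolding J2_std_def pj_def by blast

lemma Kf_pred:
  assumes "finite X" "x \<in> X" "y \<in> X"
  shows "A \<in> Kf {G \<in> ksets X k. P G} x y \<longleftrightarrow> A \<in> ksets X k \<and> x \<in> A \<and> y \<notin> A \<and> P A \<and> \<not> P (insert y (A - {x}))"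
proof -
  have "A \<in> ksets X k \<Longrightarrow> x \<in> A \<Longrightarrow> y \<notin> A \<Longrightarrow> insert y (A - {x}) \<in> ksets X k"
    using ins_ksets assms by metis
  moreover have sub: "{G \<in> ksets X k. P G} \<subseteq> ksets X k" by blast
  ultimately show ?thesis unfolding Kf_char[OF sub assms(2,3)] by blast
qed

lemma conn_J2_aux:
  assumes fX: "finite X" and cX: "2 * k + 1 \<le> card X" and k3: "3 \<le> k"
    and EX: "E \<subseteq> X" and cE: "card E = k - 1"
    and JX: "{x0, j1, j2} \<subseteq> X" and dJ: "x0 \<noteq> j1" "x0 \<noteq> j2" "j1 \<noteq> j2"
    and EJ: "x0 \<notin> E" "j1 \<notin> E" "j2 \<notin> E"
    and xX: "x \<in> X" and yX: "y \<in> X" and xy: "x \<noteq> y"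
    and nsym: "\<not> (x \<in> E \<and> y = j2)" "x \<noteq> j2"
  shows "conn (Kf (J2_std X k E {x0, j1, j2} x0) x y) x"
  unfolding conn_def
proof (intro allI impI)
  define J where "J = {x0, j1, j2}"
  fix U assume cl0: "closedU (Kf (J2_std X k E {x0, j1, j2} x0) x y) x U" and Une: "U \<noteq> {}"
  define K where "K = Kf (J2_std X k E J x0) x y"
  have cl: "closedU K x U" using cl0 unfolding K_def J_def .
  have GS: "J2_std X k E J x0 \<subseteq> ksets X k" unfolding J2_std_def by auto
  have Kc: "A \<in> K \<longleftrightarrow> A \<in> ksets X k \<and> x \<in> A \<and> y \<notin> A \<and> pj E J x0 A \<and> \<not> pj E J x0 (insert y (A - {x}))" for A
    unfolding K_def J2_pj using Kf_pred[OF fX xX yX] by blast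
  have UK: "U \<subseteq> K" using cl unfolding closedU_def by auto
  have fE: "finite E" using EX fX finite_subset by auto
  have E2: "\<exists>e\<in>E. e \<noteq> z" for z
  proof (rule ccontr)
    assume "\<not> ?thesis" then have "E \<subseteq> {z}" by auto
    then have "card E \<le> 1" using card_mono[of "{z}" E] by auto
    then show False using cE k3 by auto
  qed
  have x0X: "x0 \<in> X" "j1 \<in> X" "j2 \<in> X" using JX by auto
  show "K \<subseteq> U" unfolding K_def[symmetric]
  proof -
    consider (A) "x \<in> E" "y = j1" | (B) "x \<in> E" "y \<notin> E" "y \<notin> J"
      | (C) "x = x0" "y \<in> E" | (D) "x = x0" "y = j1 \<or> y = j2" | (E) "x = x0" "y \<notin> E" "y \<notin> J"
      | (F) "x = j1" "y \<notin> E" "y \<notin> J" | (G) "K = {}"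
    proof -
      have "K = {}" if n: "\<not> (x \<in> E \<and> y = j1)" "\<not> (x \<in> E \<and> y \<notin> E \<and> y \<notin> J)" "x \<noteq> x0"
        "\<not> (x = j1 \<and> y \<notin> E \<and> y \<notin> J)"
      proof (rule ccontr)
        assume "K \<noteq> {}"
        then obtain A where A: "A \<in> K" by auto
        have A1: "x \<in> A" "y \<notin> A" "pj E J x0 A" "\<not> pj E J x0 (insert y (A - {x}))" using A Kc by auto
        obtain e where e: "e \<in> E" "e \<noteq> x" using E2 by blast
        have "pj E J x0 (insert y (A - {x}))"
        proof (cases "x \<in> E")
          case True
          then have "y \<in> E \<or> y = x0" using n nsym unfolding J_def by auto
          then show ?thesis
          proof
            assume yE: "y \<in> E"
            then have "\<not> E \<subseteq> A" using A1 by auto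
            then have "J \<subseteq> A \<or> (x0 \<in> A \<and> A \<inter> E \<noteq> {})" using A1 unfolding pj_def by auto
            then show ?thesis using yE n(3) True EJ unfolding pj_def J_def by blast
          next
            assume yx: "y = x0"
            then have "E \<subseteq> A" using A1 unfolding pj_def J_def by auto
            then show ?thesis using yx e unfolding pj_def by blast
          qed
        next
          case xE: False
          show ?thesis
          proof (cases "x = j1")
            case True
            then have "y \<in> E \<or> y = x0 \<or> y = j2" using n xy unfolding J_def by auto
            then show ?thesis
            proof (elim disjE)
              assume yE: "y \<in> E"
              then have "\<not> E \<subseteq> A" using A1 by auto
              then have "x0 \<in> A \<and> A \<inter> E \<noteq> {} \<or> J \<subseteq> A" using A1 unfolding pj_def by auto
              then have "x0 \<in> A" unfolding J_def by auto
              then show ?thesis using yE True dJ unfolding pj_def by blast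
            next
              assume yx: "y = x0"
              then have "E \<subseteq> A" using A1 unfolding pj_def J_def by auto
              then show ?thesis using yx True xE unfolding pj_def J_def by blast
            next
              assume yj: "y = j2"
              then have "(E \<subseteq> A \<and> A \<inter> J \<noteq> {}) \<or> (x0 \<in> A \<and> A \<inter> E \<noteq> {})"
                using A1 unfolding pj_def J_def by auto
              then show ?thesis using yj True xE dJ unfolding pj_def J_def by blast
            qed
          next
            case False
            have "x \<notin> J" using False nsym n(3) unfolding J_def by auto
            then show ?thesis using A1(3) xE n(3) unfolding pj_def by blast
          qed
        qed
        then show False using A1 by simp
      qed
      note Ke = this
      show ?thesis
      proof (cases "x \<in> E \<and> y = j1")
        case True then show ?thesis using that(1) by blast
      next
        case n1: False
        show ?thesis
        proof (cases "x \<in> E \<and> y \<notin> E \<and> y \<notin> J")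
          case True then show ?thesis using that(2) by blast
        next
          case n2: False
          show ?thesis
          proof (cases "x = x0")
            case xx: True
            show ?thesis
            proof (cases "y \<in> E")
              case True then show ?thesis using that(3) xx by blast
            next
              case yE: False
              show ?thesis
              proof (cases "y = j1 \<or> y = j2")
                case True then show ?thesis using that(4) xx by blast
              next
                case False
                then have "y \<notin> J" using xx xy unfolding J_def by auto
                then show ?thesis using that(5) xx yE by blast
              qed
            qed
          next
            case n3: False
            show ?thesis
            proof (cases "x = j1 \<and> y \<notin> E \<and> y \<notin> J")
              case True then show ?thesis using that(6) by blast
            next
              case False
              then show ?thesis using that(7) Ke n1 n2 n3 by blast
            qed
          qed
        qed
      qed
    qed
    then show "K \<subseteq> U"
    proof cases
      case A
      have xx0: "x \<noteq> x0" "x \<noteq> j2" using A EJ by auto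
      have "K = Pb X k {y} x (insert j2 E) {x, x0} \<union> Pb X k {y} x {x, x0} (insert j2 E)"
      proof (rule set_eqI)
        fix B
        show "B \<in> K \<longleftrightarrow> B \<in> Pb X k {y} x (insert j2 E) {x, x0} \<union> Pb X k {y} x {x, x0} (insert j2 E)"
          unfolding Kc Pb_def pj_def J_def using A xx0 dJ EJ by auto
      qed
      moreover have bk: "blk X k {y} x (insert j2 E) {x, x0}"
        by (rule blk_intro) (use fX EX x0X xX yX A xx0 dJ EJ cE k3 fE cX in auto)
      ultimately show ?thesis using GK[OF bk cl] UK Une by auto
    next
      case B
      have xx0: "x \<noteq> x0" "x \<noteq> j2" "x \<noteq> j1" using B EJ by auto
      define Pa where "Pa = Pb X k {y} x (insert j1 E) {x, x0} \<union> Pb X k {y} x {x, x0} (insert j1 E)"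
      define Pb' where "Pb' = Pb X k {y} x (insert j2 E) {x, x0} \<union> Pb X k {y} x {x, x0} (insert j2 E)"
      have "K = Pa \<union> Pb'"
      proof (rule set_eqI)
        fix B
        show "B \<in> K \<longleftrightarrow> B \<in> Pa \<union> Pb'"
        proof -
          obtain e where e: "e \<in> E" "e \<noteq> x" using E2 by blast
          have yJ: "y \<noteq> x0" "y \<noteq> j1" "y \<noteq> j2" using B unfolding J_def by auto
          have h1: "\<not> E \<subseteq> insert y (B - {x})" using B xy by auto
          have h2: "insert y (B - {x}) \<inter> E = (B - {x}) \<inter> E" using B by auto
          have h3: "B \<inter> (insert j E - {x}) = {} \<longleftrightarrow> j \<notin> B \<and> (B - {x}) \<inter> E = {}" if "j \<noteq> x" for j
            using that by auto
          have h4: "E \<subseteq> B \<Longrightarrow> (B - {x}) \<inter> E \<noteq> {}" using e by auto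
          have p1: "x \<in> B \<Longrightarrow> pj E J x0 B \<longleftrightarrow> (E \<subseteq> B \<and> (x0 \<in> B \<or> j1 \<in> B \<or> j2 \<in> B)) \<or> x0 \<in> B"
            unfolding pj_def J_def using B by auto
          have p2: "pj E J x0 (insert y (B - {x})) \<longleftrightarrow> (x0 \<in> B \<and> j1 \<in> B \<and> j2 \<in> B) \<or> (x0 \<in> B \<and> (B - {x}) \<inter> E \<noteq> {})"
            unfolding pj_def J_def h2 using h1 yJ xx0 by auto
          have m1: "B \<in> Pb X k {y} x (insert j E) {x, x0} \<longleftrightarrow> B \<in> ksets X k \<and> E \<subseteq> B \<and> j \<in> B \<and> x0 \<notin> B \<and> y \<notin> B" for j
            unfolding Pb_def using xx0 by auto
          have m2: "B \<in> Pb X k {y} x {x, x0} (insert j E) \<longleftrightarrow> B \<in> ksets X k \<and> x \<in> B \<and> x0 \<in> B \<and> j \<notin> B \<and> (B - {x}) \<inter> E = {} \<and> y \<notin> B"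
            if "j \<noteq> x" for j
            unfolding Pb_def using h3[OF that] by auto
          show ?thesis
            unfolding Kc Pa_def Pb'_def Un_iff m1 m2[OF xx0(3)[symmetric]] m2[OF xx0(2)[symmetric]]
            using p1 p2 h4 B(1) by blast
        qed
      qed
      moreover have bka: "blk X k {y} x (insert j1 E) {x, x0}"
        by (rule blk_intro) (use fX EX x0X xX yX B xx0 dJ EJ cE k3 fE cX in \<open>auto simp: J_def\<close>)
      moreover have bkb: "blk X k {y} x (insert j2 E) {x, x0}"
        by (rule blk_intro) (use fX EX x0X xX yX B xx0 dJ EJ cE k3 fE cX in \<open>auto simp: J_def\<close>)
      moreover have "Pa \<inter> Pb' \<inter> U \<noteq> {} \<or> Pa \<inter> Pb' \<noteq> {}"
      proof -
        define Z where "Z = insert y (insert j1 (insert j2 (E - {x})))"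
        have "card (E - {x}) = k - 2" using B cE fE by auto
        moreover have a1: "card (insert j2 (E - {x})) \<le> card (E - {x}) + 1" by (rule card_le_ins) (simp add: fE)
        moreover have a2: "card (insert j1 (insert j2 (E - {x}))) \<le> card (insert j2 (E - {x})) + 1"
          by (rule card_le_ins) (simp add: fE)
        moreover have a3: "card Z \<le> card (insert j1 (insert j2 (E - {x}))) + 1"
          unfolding Z_def by (rule card_le_ins) (simp add: fE)
        ultimately have "card Z \<le> k + 1" using k3 by linarith
        moreover have ZX: "Z \<subseteq> X" unfolding Z_def using yX x0X EX by auto
        ultimately have "k \<le> card (X - Z)" using card_Diff_sub[OF fX ZX] cX by linarith
        moreover have "{x, x0} \<inter> Z = {}" unfolding Z_def using B xx0 dJ EJ by (auto simp: J_def)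
        moreover have "card {x, x0} \<le> k" using k3 by (simp add: card_insert_if)
        ultimately obtain C where C: "C \<subseteq> X" "card C = k" "{x, x0} \<subseteq> C" "C \<inter> Z = {}"
          using ex_kset[OF fX, of "{x, x0}" Z k] xX x0X by auto
        then have "C \<in> Pa" "C \<in> Pb'" unfolding Pa_def Pb'_def Pb_def ksets_def Z_def by auto
        then show ?thesis by blast
      qed
      then obtain C where Cab: "C \<in> Pa" "C \<in> Pb'" by blast
      have Pa_U: "U \<inter> Pa \<noteq> {} \<Longrightarrow> Pa \<subseteq> U" using GK[OF bka cl] \<open>K = Pa \<union> Pb'\<close> unfolding Pa_def by auto
      have Pb_U: "U \<inter> Pb' \<noteq> {} \<Longrightarrow> Pb' \<subseteq> U" using GK[OF bkb cl] \<open>K = Pa \<union> Pb'\<close> unfolding Pb'_def by auto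
      have "U \<inter> Pa \<noteq> {} \<or> U \<inter> Pb' \<noteq> {}" using UK Une \<open>K = Pa \<union> Pb'\<close> by auto
      then have "Pa \<subseteq> U \<and> Pb' \<subseteq> U" using Pa_U Pb_U Cab by blast
      then show ?thesis using \<open>K = Pa \<union> Pb'\<close> by auto
    next
      case C
      obtain e where e: "e \<in> E" "e \<noteq> y" using E2 by blast
      have Keq: "K = Apart X k x y (E - {y}) \<union> Pb X k {y} x (insert x (E - {y})) (insert x {j1, j2})
             \<union> Pb X k {y} x (insert x {j1, j2}) (insert x (E - {y}))"
      proof (rule set_eqI)
        fix B
        show "B \<in> K \<longleftrightarrow> B \<in> Apart X k x y (E - {y}) \<union> Pb X k {y} x (insert x (E - {y})) (insert x {j1, j2})
             \<union> Pb X k {y} x (insert x {j1, j2}) (insert x (E - {y}))"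
          unfolding Kc Pb_def pj_def J_def Apart_def using C dJ EJ e by auto
      qed
      have "E - {y} \<noteq> {}" using E2[of y] by auto
      moreover have "card (E - {y}) \<le> k - 1" using cE fE card_Diff1_le[of E y] by auto
      ultimately show ?thesis
        using patC[OF fX cX k3 xX yX xy _ _ _ _ _ _ cl Keq Une] C EX EJ dJ x0X by auto
    next
      case D
      have "K = Apart X k x y E"
      proof (rule set_eqI)
        fix B
        show "B \<in> K \<longleftrightarrow> B \<in> Apart X k x y E"
          unfolding Kc pj_def J_def Apart_def using D dJ EJ by auto
      qed
      moreover have "E \<subseteq> X - {x, y}" using D EX EJ by auto
      ultimately show ?thesis
        using patA[OF fX cX k3 xX yX xy _ cl] UK Une by auto
    next
      case E
      obtain e where e: "e \<in> E" using E2 by blast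
      have Keq: "K = Apart X k x y E \<union> Pb X k {y} x (insert x E) (insert x {j1, j2})
             \<union> Pb X k {y} x (insert x {j1, j2}) (insert x E)"
      proof (rule set_eqI)
        fix B
        show "B \<in> K \<longleftrightarrow> B \<in> Apart X k x y E \<union> Pb X k {y} x (insert x E) (insert x {j1, j2})
             \<union> Pb X k {y} x (insert x {j1, j2}) (insert x E)"
          unfolding Kc Pb_def pj_def J_def Apart_def using E[unfolded J_def] dJ EJ e by auto
      qed
      show ?thesis
        using patC[OF fX cX k3 xX yX xy _ _ _ _ _ _ cl Keq Une] E EX EJ dJ x0X e cE by (auto simp: J_def)
    next
      case F
      obtain e where e: "e \<in> E" using E2 by blast
      have "K = Pb X k {y} x (insert j1 E) J \<union> Pb X k {y} x J (insert j1 E)"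
      proof (rule set_eqI)
        fix B
        show "B \<in> K \<longleftrightarrow> B \<in> Pb X k {y} x (insert j1 E) J \<union> Pb X k {y} x J (insert j1 E)"
          unfolding Kc Pb_def pj_def using F dJ EJ e by (auto simp: J_def)
      qed
      moreover have bk: "blk X k {y} x (insert j1 E) J"
        by (rule blk_intro) (use fX EX x0X xX yX F dJ EJ cE k3 fE cX in \<open>auto simp: J_def card_insert_if\<close>)
      ultimately show ?thesis using GK[OF bk cl] UK Une by auto
    next
      case G
      then show ?thesis by auto
    qed
  qed
qed


lemma G_pg: "G_std X k E x0 = {G \<in> ksets X k. E \<subseteq> G \<or> (x0 \<in> G \<and> G \<inter> E \<noteq> {})}"
  unfolding G_std_def by blast

lemma conn_J2:
  assumes fX: "finite X" and cX: "2 * k + 1 \<le> card X" and k3: "3 \<le> k"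
    and EX: "E \<subseteq> X" and cE: "card E = k - 1"
    and JX: "J \<subseteq> X - E" and cJ: "card J = 3" and x0J: "x0 \<in> J"
    and xX: "x \<in> X" and yX: "y \<in> X" and xy: "x \<noteq> y"
  shows "conn (Kf (J2_std X k E J x0) x y) x"
proof -
  have fJ: "finite J" using JX fX finite_subset by blast
  have "card (J - {x0}) = 2" using cJ x0J fJ by simp
  then obtain j1 j2 where j: "J - {x0} = {j1, j2}" "j1 \<noteq> j2" by (meson card_2_iff)
  have Jeq: "J = {x0, j1, j2}" using j x0J by auto
  have d: "x0 \<noteq> j1" "x0 \<noteq> j2" using j by auto
  have JX': "{x0, j1, j2} \<subseteq> X" "x0 \<notin> E" "j1 \<notin> E" "j2 \<notin> E" using JX Jeq by auto
  show ?thesis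
  proof (cases "(x \<in> E \<and> y = j2) \<or> x = j2")
    case False
    then show ?thesis unfolding Jeq
      using conn_J2_aux[OF fX cX k3 EX cE JX'(1) d j(2) JX'(2-4) xX yX xy] by auto
  next
    case True
    have J2: "{x0, j1, j2} = {x0, j2, j1}" by auto
    have "{x0, j2, j1} \<subseteq> X" using JX'(1) by auto
    moreover have "\<not> (x \<in> E \<and> y = j1)" "x \<noteq> j1" using True j(2) JX' by auto
    ultimately show ?thesis unfolding Jeq J2
      using conn_J2_aux[OF fX cX k3 EX cE _ d(2) d(1) j(2)[symmetric] JX'(2) JX'(4) JX'(3) xX yX xy] by auto
  qed
qed

lemma img_fam:
  assumes bij: "bij_betw g X X" and PQ: "\<And>A. A \<subseteq> X \<Longrightarrow> P A \<longleftrightarrow> Q (g ` A)"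
  shows "(\<lambda>A. g ` A) ` {A \<in> ksets X k. P A} = {G \<in> ksets X k. Q G}"
proof
  have inj: "inj_on g X" and gX: "g ` X = X" using bij_betw_imp_inj_on[OF bij] bij_betw_imp_surj_on[OF bij] by auto
  show "(\<lambda>A. g ` A) ` {A \<in> ksets X k. P A} \<subseteq> {G \<in> ksets X k. Q G}"
  proof
    fix G assume "G \<in> (\<lambda>A. g ` A) ` {A \<in> ksets X k. P A}"
    then obtain A where A: "A \<in> ksets X k" "P A" "G = g ` A" by auto
    have "card (g ` A) = card A" using card_image inj_on_subset[OF inj] A unfolding ksets_def by auto
    then show "G \<in> {G \<in> ksets X k. Q G}" using A PQ gX unfolding ksets_def by auto
  qed
  show "{G \<in> ksets X k. Q G} \<subseteq> (\<lambda>A. g ` A) ` {A \<in> ksets X k. P A}"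
  proof
    fix G assume G: "G \<in> {G \<in> ksets X k. Q G}"
    define A where "A = inv_into X g ` G"
    have GX: "G \<subseteq> X" using G unfolding ksets_def by auto
    have AX: "A \<subseteq> X"
    proof
      fix a assume "a \<in> A"
      then obtain z where z: "z \<in> G" "a = inv_into X g z" unfolding A_def by auto
      then have "z \<in> g ` X" using GX gX by auto
      then show "a \<in> X" using z inv_into_into by metis
    qed
    have gA: "g ` A = G" unfolding A_def using GX gX by (simp add: image_inv_into_cancel)
    have "card (g ` A) = card A" using card_image inj_on_subset[OF inj AX] by auto
    then have "A \<in> ksets X k" using G AX gA unfolding ksets_def by auto
    moreover have "P A" using PQ[OF AX] gA G by auto
    ultimately show "G \<in> (\<lambda>A. g ` A) ` {A \<in> ksets X k. P A}" using gA by blast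
  qed
qed

lemma iso_std:
  assumes fX: "finite X" and FX: "F \<subseteq> ksets X k" and SX: "S \<subseteq> ksets X k" and iso: "iso_fam X F S"
  shows "\<exists>g. bij_betw g X X \<and> F = (\<lambda>A. g ` A) ` S"
proof -
  obtain f where f: "inj_on f X" "f ` X \<subseteq> X" "(\<lambda>E. f ` E) ` F \<subseteq> S"
    using iso unfolding iso_fam_def maps_into_def by auto
  obtain g where g: "inj_on g X" "g ` X \<subseteq> X" "(\<lambda>E. g ` E) ` S \<subseteq> F"
    using iso unfolding iso_fam_def maps_into_def by auto
  have fin: "finite (ksets X k)" using fX unfolding ksets_def by simp
  have fF: "finite F" "finite S" using fin FX SX finite_subset by auto
  have injimg: "inj_on (\<lambda>E. h ` E) (ksets X k)" if "inj_on h X" for h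
    using that unfolding ksets_def inj_on_def by (auto dest: inj_on_image_eq_iff[OF that])
  have "card F \<le> card S"
    using card_inj_on_le[OF inj_on_subset[OF injimg[OF f(1)] FX] f(3) fF(2)] .
  moreover have cS: "card ((\<lambda>E. g ` E) ` S) = card S"
    using card_image[OF inj_on_subset[OF injimg[OF g(1)] SX]] .
  ultimately have "(\<lambda>E. g ` E) ` S = F" using card_subset_eq[OF fF(1) g(3)] card_mono[OF fF(1) g(3)] by auto
  moreover have "bij_betw g X X"
    using g fX by (simp add: bij_betw_def endo_inj_surj)
  ultimately show ?thesis by auto
qed

lemma bij_props:
  assumes "bij_betw g X X" "A \<subseteq> X" "B \<subseteq> X" "z \<in> X"
  shows "B \<subseteq> A \<longleftrightarrow> g ` B \<subseteq> g ` A" "z \<in> A \<longleftrightarrow> g z \<in> g ` A"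
    "A \<inter> B \<noteq> {} \<longleftrightarrow> g ` A \<inter> g ` B \<noteq> {}"
proof -
  have inj: "inj_on g X" using bij_betw_imp_inj_on[OF assms(1)] .
  show "B \<subseteq> A \<longleftrightarrow> g ` B \<subseteq> g ` A"
  proof
    assume h: "g ` B \<subseteq> g ` A"
    show "B \<subseteq> A"
    proof
      fix b assume "b \<in> B"
      then have "g b \<in> g ` A" "b \<in> X" using h assms by auto
      then show "b \<in> A" using inj_on_image_mem_iff[OF inj, of b A] assms by auto
    qed
  qed auto
  show "z \<in> A \<longleftrightarrow> g z \<in> g ` A" using inj_on_image_mem_iff[OF inj] assms by metis
  show "A \<inter> B \<noteq> {} \<longleftrightarrow> g ` A \<inter> g ` B \<noteq> {}" using inj_on_image_Int[OF inj assms(2,3)] by auto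
qed

lemma G_reduce:
  assumes fX: "finite X" and FX: "F \<subseteq> ksets X k" and G: "is_G X k i F"
  shows "\<exists>E x0. E \<subseteq> X \<and> card E = i \<and> x0 \<in> X \<and> x0 \<notin> E \<and> F = G_std X k E x0"
proof -
  obtain E x0 where E: "E \<subseteq> X" "card E = i" "x0 \<in> X - E" "iso_fam X F (G_std X k E x0)"
    using G unfolding is_G_def by auto
  obtain g where g: "bij_betw g X X" "F = (\<lambda>A. g ` A) ` G_std X k E x0"
    using iso_std[OF fX FX _ E(4)] unfolding G_std_def by auto
  have inj: "inj_on g X" and gX: "g ` X = X" using bij_betw_imp_inj_on[OF g(1)] bij_betw_imp_surj_on[OF g(1)] by auto
  have "(\<lambda>A. g ` A) ` G_std X k E x0 = G_std X k (g ` E) (g x0)"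
    unfolding G_pg
  proof (rule img_fam[OF g(1)])
    fix A assume AX: "A \<subseteq> X"
    have x0X: "x0 \<in> X" using E by auto
    note b = bij_props[OF g(1) AX E(1) x0X]
    show "(E \<subseteq> A \<or> x0 \<in> A \<and> A \<inter> E \<noteq> {}) \<longleftrightarrow>
      (g ` E \<subseteq> g ` A \<or> g x0 \<in> g ` A \<and> g ` A \<inter> g ` E \<noteq> {})"
      by (simp only: b)
  qed
  moreover have "card (g ` E) = i" using card_image[OF inj_on_subset[OF inj E(1)]] E(2) by simp
  moreover have "g ` E \<subseteq> X" "g x0 \<in> X" using image_mono[OF E(1), of g] gX E(3) by auto
  moreover have "g x0 \<notin> g ` E" using E inj_on_image_mem_iff[OF inj] by auto
  ultimately show ?thesis using g by blast
qed

lemma J2_reduce: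
  assumes fX: "finite X" and FX: "F \<subseteq> ksets X k" and G: "is_J2 X k F"
  shows "\<exists>E J x0. E \<subseteq> X \<and> card E = k - 1 \<and> J \<subseteq> X - E \<and> card J = 3 \<and> x0 \<in> J \<and> F = J2_std X k E J x0"
proof -
  obtain E J x0 where E: "E \<subseteq> X" "card E = k - 1" "J \<subseteq> X - E" "card J = 3" "x0 \<in> J"
      "iso_fam X F (J2_std X k E J x0)"
    using G unfolding is_J2_def by auto
  obtain g where g: "bij_betw g X X" "F = (\<lambda>A. g ` A) ` J2_std X k E J x0"
    using iso_std[OF fX FX _ E(6)] unfolding J2_std_def by auto
  have inj: "inj_on g X" and gX: "g ` X = X" using bij_betw_imp_inj_on[OF g(1)] bij_betw_imp_surj_on[OF g(1)] by auto
  have JX: "J \<subseteq> X" using E by auto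
  have "(\<lambda>A. g ` A) ` J2_std X k E J x0 = J2_std X k (g ` E) (g ` J) (g x0)"
    unfolding J2_pj pj_def
  proof (rule img_fam[OF g(1)])
    fix A assume AX: "A \<subseteq> X"
    have x0X: "x0 \<in> X" using E JX by auto
    note b = bij_props[OF g(1) AX E(1) x0X] and c = bij_props[OF g(1) AX JX x0X]
    show "((E \<subseteq> A \<and> A \<inter> J \<noteq> {}) \<or> J \<subseteq> A \<or> (x0 \<in> A \<and> A \<inter> E \<noteq> {})) \<longleftrightarrow>
      ((g ` E \<subseteq> g ` A \<and> g ` A \<inter> g ` J \<noteq> {}) \<or> g ` J \<subseteq> g ` A \<or> (g x0 \<in> g ` A \<and> g ` A \<inter> g ` E \<noteq> {}))"
      by (simp only: b c)
  qed
  moreover have "card (g ` E) = k - 1" using card_image[OF inj_on_subset[OF inj E(1)]] E(2) by simp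
  moreover have "card (g ` J) = 3" using card_image[OF inj_on_subset[OF inj JX]] E(4) by simp
  moreover have "g ` E \<subseteq> X" "g ` J \<subseteq> X" using image_mono[OF E(1), of g] image_mono[OF JX, of g] gX by auto
  moreover have "g ` J \<inter> g ` E = {}" using inj_on_image_Int[OF inj JX E(1)] E by auto
  moreover have "g x0 \<in> g ` J" using E by auto
  ultimately have "g ` E \<subseteq> X \<and> card (g ` E) = k - 1 \<and> g ` J \<subseteq> X - g ` E \<and> card (g ` J) = 3
      \<and> g x0 \<in> g ` J \<and> F = J2_std X k (g ` E) (g ` J) (g x0)" using g(2) by auto
  then show ?thesis by (intro exI[of _ "g ` E"] exI[of _ "g ` J"] exI[of _ "g x0"])
qed

theorem lemma3p1:
  fixes X :: "'a::linorder set" and H F :: "'a set set" and k n :: nat and x y :: 'a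
  assumes "k \<ge> 3" and "n > 2 * k"
    and "finite X" and "card X = n"
    and "H \<subseteq> ksets X k" and "intersecting H"
    and "x \<in> X" and "y \<in> X" and "x < y"
    and "shift x y H = F"
    and "is_J2 X k F \<or> is_G X k (k - 1) F \<or> is_G X k 2 F"
  shows "iso_fam X H F"
proof -
  note fX = assms(3) and k3 = assms(1) and xX = assms(7) and yX = assms(8)
  have xy: "x \<noteq> y" using assms(9) by auto
  have cX: "2 * k + 1 \<le> card X" using assms(2,4) by auto
  have FX: "F \<subseteq> ksets X k" using shift_ksets[OF assms(5) xX yX] assms(10) by auto
  have c: "conn (Kf F x y) x"
    using assms(11)
  proof (elim disjE)
    assume "is_J2 X k F"
    then obtain E J x0 where E: "E \<subseteq> X" "card E = k - 1" "J \<subseteq> X - E" "card J = 3" "x0 \<in> J"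
        "F = J2_std X k E J x0"
      using J2_reduce[OF fX FX] by blast
    show ?thesis unfolding E(6) using conn_J2[OF fX cX k3 E(1-5) xX yX xy] .
  next
    assume "is_G X k (k - 1) F"
    then obtain E x0 where E: "E \<subseteq> X" "card E = k - 1" "x0 \<in> X" "x0 \<notin> E" "F = G_std X k E x0"
      using G_reduce[OF fX FX] by blast
    show ?thesis unfolding E(5) using conn_G[OF fX cX k3 E(1,3,4) E(2) _ _ xX yX xy] k3 by auto
  next
    assume "is_G X k 2 F"
    then obtain E x0 where E: "E \<subseteq> X" "card E = 2" "x0 \<in> X" "x0 \<notin> E" "F = G_std X k E x0"
      using G_reduce[OF fX FX] by blast
    show ?thesis unfolding E(5) using conn_G[OF fX cX k3 E(1,3,4) E(2) _ _ xX yX xy] k3 by auto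
  qed
  have "H = F \<or> H = (\<lambda>A. tr x y ` A) ` F"
    using main_generic[OF assms(5,6) xX yX xy] c assms(10) by auto
  then show ?thesis
  proof
    assume "H = F"
    then show ?thesis unfolding iso_fam_def maps_into_def
      by (intro conjI exI[of _ id]) auto
  next
    assume HF: "H = (\<lambda>A. tr x y ` A) ` F"
    have i: "inj_on (tr x y) X" "tr x y ` X \<subseteq> X" using inj_on_subset[OF inj_tr] tr_X[OF xX yX] by auto
    have "(\<lambda>A. tr x y ` A) ` H = F" unfolding HF by (simp add: image_image)
    then show ?thesis unfolding iso_fam_def maps_into_def using i HF
      by (intro conjI exI[of _ "tr x y"]) auto
  qed
qed

end
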